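(* Let $N\ge 1$ and $\nu\in\mathbb S_N$. For $k\in\mathbb Z$ put $F_k(\nu):=\mathrm{Dim}_{1,N}(k,\nu)/\mathrm{Dim}_N\nu$, and set $$H^*(t;\nu)=\prod_{j=1}^N\frac{t+j}{t+j-\nu_j},$$ where $t$ is a formal variable. Then the following identity of rational functions of $t$ holds: $$H^*(t;\nu)=\sum_{k\in\mathbb Z}F_k(\nu)\,\frac{(t+1)(t+2)\cdots(t+N)}{(t+1-k)(t+2-k)\cdots(t+N-k)}.$$ The sum is finite, because $F_k(\nu)=0$ unless $\nu_N\le k\le\nu_1$.
   Context: For $N\ge1$, a signature of length $N$ is an $N$-tuple of integers $\nu=(\nu_1\ge\nu_2\ge\dots\ge\nu_N)$, and $\mathbb S_N\subset\mathbb Z^N$ denotes the set of all of them; in particular $\mathbb S_1=\mathbb Z$. For $\nu\in\mathbb S_N$ and $\lambda\in\mathbb S_{N-1}$ write $\lambda\prec\nu$ (the two signatures are interlaced) if $\nu_i\ge\lambda_i\ge\nu_{i+1}$ for $i=1,\dots,N-1$. Weyl's dimension is $\mathrm{Dim}_N\nu=\prod_{1\le i<j\le N}\frac{\nu_i-\nu_j-i+j}{j-i}$. For $K<N$, $\kappa\in\mathbb S_K$ and $\nu\in\mathbb S_N$, $\mathrm{Dim}_{K,N}(\kappa,\nu)$ is the number of chains $\kappa=\lambda^{(K)}\prec\lambda^{(K+1)}\prec\dots\prec\lambda^{(N)}=\nu$ with $\lambda^{(j)}\in\mathbb S_j$. *)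

theory Defs
  imports "HOL-Computational_Algebra.Polynomial" "HOL-Computational_Algebra.Fraction_Field"
begin

text \<open>Signatures of length N are represented as int lists of length N (0-indexed:
  nu ! (i-1) is the paper's nu_i).\<close>

definition sig :: "nat \<Rightarrow> int list set" where
  "sig N = {nu. length nu = N \<and> (\<forall>i. i + 1 < N \<longrightarrow> nu ! i \<ge> nu ! (i + 1))}"

definition interlaced :: "int list \<Rightarrow> int list \<Rightarrow> bool" where
  "interlaced lam nu \<longleftrightarrow> length nu = length lam + 1 \<and>
     (\<forall>i < length lam. nu ! i \<ge> lam ! i \<and> lam ! i \<ge> nu ! (i + 1))"

definition DimW :: "nat \<Rightarrow> int list \<Rightarrow> rat" where
  "DimW N nu = (\<Prod>(i, j) \<in> {(i, j). i < j \<and> j < N}.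
       of_int (nu ! i - nu ! j - int i + int j) / of_int (int j - int i))"

text \<open>Number of chains kappa = lam(K) < lam(K+1) < ... < lam(N) = nu, lam(j) in S_j.
  The chain is the list ls with ls ! m = lam(K+m).\<close>
definition DimKN :: "nat \<Rightarrow> nat \<Rightarrow> int list \<Rightarrow> int list \<Rightarrow> nat" where
  "DimKN K N kappa nu = card {ls. length ls = N - K + 1 \<and> ls ! 0 = kappa \<and> ls ! (N - K) = nu
      \<and> (\<forall>m \<le> N - K. ls ! m \<in> sig (K + m))
      \<and> (\<forall>m < N - K. interlaced (ls ! m) (ls ! (m + 1)))}"

definition Fk :: "nat \<Rightarrow> int list \<Rightarrow> int \<Rightarrow> rat" where
  "Fk N nu k = of_nat (DimKN 1 N [k] nu) / DimW N nu"

definition Hstar :: "nat \<Rightarrow> int list \<Rightarrow> rat poly fract" where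
  "Hstar N nu = (\<Prod>j\<in>{1..N}. Fract [:of_nat j, 1:] [:of_nat j - of_int (nu ! (j - 1)), 1:])"

definition shift_ratio :: "nat \<Rightarrow> int \<Rightarrow> rat poly fract" where
  "shift_ratio N k = Fract (\<Prod>j\<in>{1..N}. [:of_nat j, 1:]) (\<Prod>j\<in>{1..N}. [:of_nat j - of_int k, 1:])"

end

theory Submission
  imports Defs "Jordan_Normal_Form.Determinant"
begin


definition Ch :: "nat \<Rightarrow> int \<Rightarrow> int list \<Rightarrow> int list list set" where
  "Ch M k nu = {ls. length ls = M - 1 + 1 \<and> ls ! 0 = [k] \<and> ls ! (M - 1) = nu
      \<and> (\<forall>m \<le> M - 1. ls ! m \<in> sig (1 + m))
      \<and> (\<forall>m < M - 1. interlaced (ls ! m) (ls ! (m + 1)))}"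

lemma DimKN_Ch: "DimKN 1 M [k] nu = card (Ch M k nu)"
  by (simp add: DimKN_def Ch_def)

lemma DimKN_Ch': "DimKN (Suc 0) M [k] nu = card (Ch M k nu)"
  using DimKN_Ch by simp

definition boxL :: "nat \<Rightarrow> (nat \<Rightarrow> int set) \<Rightarrow> int list set" where
  "boxL n S = {xs. length xs = n \<and> (\<forall>j<n. xs ! j \<in> S j)}"

definition IntS :: "int list \<Rightarrow> nat \<Rightarrow> int set" where
  "IntS nu j = {nu ! (j + 1) .. nu ! j}"

lemma finite_boxL:
  assumes "\<And>j. j < n \<Longrightarrow> finite (S j)"
  shows "finite (boxL n S)"
proof -
  have "boxL n S \<subseteq> {xs. set xs \<subseteq> (\<Union>j<n. S j) \<and> length xs = n}"
    unfolding boxL_def by (force simp: in_set_conv_nth)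
  moreover have "finite {xs. set xs \<subseteq> (\<Union>j<n. S j) \<and> length xs = n}"
    by (rule finite_lists_length_eq) (use assms in auto)
  ultimately show ?thesis by (rule finite_subset)
qed

lemma finite_boxL_IntS: "finite (boxL n (IntS nu))"
  by (rule finite_boxL) (simp add: IntS_def)

lemma boxL_sig:
  assumes "lam \<in> boxL n (IntS nu)"
  shows "lam \<in> sig n"
  unfolding sig_def
proof (intro CollectI conjI allI impI)
  show "length lam = n" using assms by (simp add: boxL_def)
  fix i assume i: "i + 1 < n"
  have "lam ! i \<ge> nu ! (i+1)" using assms i by (simp add: boxL_def IntS_def)
  moreover have "lam ! (i+1) \<le> nu ! (i+1)" using assms i by (simp add: boxL_def IntS_def)
  ultimately show "lam ! i \<ge> lam ! (i + 1)" by simp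
qed

lemma boxL_interlaced:
  assumes "lam \<in> boxL n (IntS nu)" "length nu = n + 1"
  shows "interlaced lam nu"
  using assms unfolding boxL_def IntS_def interlaced_def by auto

lemma interlaced_boxL:
  assumes "interlaced lam nu"
  shows "lam \<in> boxL (length nu - 1) (IntS nu)"
  using assms unfolding boxL_def IntS_def interlaced_def by auto

lemma Ch_step:
  assumes M: "M \<ge> 2" and nu: "nu \<in> sig M"
  shows "Ch M k nu = (\<Union>lam \<in> boxL (M - 1) (IntS nu). (\<lambda>ls. ls @ [nu]) ` Ch (M - 1) k lam)"
proof (intro equalityI subsetI)
  fix ls assume ls: "ls \<in> Ch M k nu"
  let ?lam = "ls ! (M - 2)"
  let ?ls' = "butlast ls"
  have len: "length ls = M" using ls M by (simp add: Ch_def)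
  have last: "ls ! (M - 1) = nu" using ls by (simp add: Ch_def)
  have eq: "ls = ?ls' @ [nu]"
  proof -
    have "ls \<noteq> []" using len M by auto
    then have "ls = butlast ls @ [last ls]" by simp
    moreover have "last ls = nu" using \<open>ls \<noteq> []\<close> len last by (simp add: last_conv_nth)
    ultimately show ?thesis by simp
  qed
  have nth': "\<And>m. m < M - 1 \<Longrightarrow> ?ls' ! m = ls ! m" using len by (simp add: nth_butlast)
  have il: "interlaced ?lam nu"
  proof -
    have "\<forall>m < M - 1. interlaced (ls ! m) (ls ! (m + 1))" using ls by (simp add: Ch_def)
    then have "interlaced (ls ! (M-2)) (ls ! (M - 2 + 1))" using M by simp
    moreover have "M - 2 + 1 = M - 1" using M by simp
    ultimately show ?thesis using last by simp
  qed
  have lenlam: "length ?lam = M - 1"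
  proof -
    have "length nu = length ?lam + 1" using il by (simp add: interlaced_def)
    moreover have "length nu = M" using nu by (simp add: sig_def)
    ultimately show ?thesis by simp
  qed
  have lamb: "?lam \<in> boxL (M - 1) (IntS nu)"
    using interlaced_boxL[OF il] nu by (simp add: sig_def)
  have "?ls' \<in> Ch (M - 1) k ?lam"
    unfolding Ch_def
  proof (intro CollectI conjI allI impI)
    show "length ?ls' = M - 1 - 1 + 1" using len M by simp
    show "?ls' ! 0 = [k]" using nth'[of 0] M ls by (simp add: Ch_def)
    have "M - 1 - 1 = M - 2" by simp
    moreover have "M - 2 < M - 1" using M by simp
    ultimately show "?ls' ! (M - 1 - 1) = ?lam" using nth'[of "M-2"] by simp
    fix m
    { assume "m \<le> M - 1 - 1"
      then show "?ls' ! m \<in> sig (1 + m)" using nth'[of m] ls M by (simp add: Ch_def) }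
    { assume "m < M - 1 - 1"
      then show "interlaced (?ls' ! m) (?ls' ! (m + 1))" using nth'[of m] nth'[of "m+1"] ls M
        by (simp add: Ch_def) }
  qed
  then show "ls \<in> (\<Union>lam \<in> boxL (M - 1) (IntS nu). (\<lambda>ls. ls @ [nu]) ` Ch (M - 1) k lam)"
    using lamb eq by blast
next
  fix ls assume "ls \<in> (\<Union>lam \<in> boxL (M - 1) (IntS nu). (\<lambda>ls. ls @ [nu]) ` Ch (M - 1) k lam)"
  then obtain lam ls' where lam: "lam \<in> boxL (M - 1) (IntS nu)" and ls': "ls' \<in> Ch (M - 1) k lam"
    and eq: "ls = ls' @ [nu]" by blast
  have len': "length ls' = M - 1" using ls' M by (simp add: Ch_def)
  have il: "interlaced lam nu" using boxL_interlaced[OF lam] nu M by (simp add: sig_def)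
  show "ls \<in> Ch M k nu"
    unfolding Ch_def
  proof (intro CollectI conjI allI impI)
    show "length ls = M - 1 + 1" using eq len' by simp
    show "ls ! 0 = [k]" using eq len' ls' M by (simp add: Ch_def nth_append)
    show "ls ! (M - 1) = nu" using eq len' by (simp add: nth_append)
    fix m
    { assume m: "m \<le> M - 1"
      show "ls ! m \<in> sig (1 + m)"
      proof (cases "m < M - 1")
        case True then show ?thesis using eq len' ls' by (simp add: Ch_def nth_append)
      next
        case False then have "m = M - 1" using m by simp
        then show ?thesis using eq len' nu M by (simp add: nth_append)
      qed }
    { assume m: "m < M - 1"
      show "interlaced (ls ! m) (ls ! (m + 1))"
      proof (cases "m + 1 < M - 1")
        case True then show ?thesis using eq len' ls' by (simp add: Ch_def nth_append)
      next
        case False then have "m = M - 2" using m by simp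
        moreover have "ls' ! (M - 2) = lam" using ls' by (simp add: Ch_def numeral_2_eq_2)
        have lt: "M - 2 < length ls'" using len' M by simp
        have a: "ls ! m = lam" using \<open>m = M - 2\<close> eq lt \<open>ls' ! (M - 2) = lam\<close>
          by (simp add: nth_append)
        have "m + 1 = length ls'" using \<open>m = M - 2\<close> len' M by simp
        then have b: "ls ! (m + 1) = nu" using eq by simp
        show ?thesis using a b il by simp
      qed }
  qed
qed

lemma Ch_1: "Ch (Suc 0) k nu = (if nu = [k] then {[[k]]} else {})"
proof -
  have "Ch (Suc 0) k nu = {ls. length ls = 1 \<and> ls ! 0 = [k] \<and> ls ! 0 = nu}"
    unfolding Ch_def by (auto simp: sig_def)
  also have "\<dots> = (if nu = [k] then {[[k]]} else {})"
    by (auto simp: length_Suc_conv)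
  finally show ?thesis .
qed

lemma Ch_finite_card:
  assumes "M \<ge> 1" "nu \<in> sig M"
  shows "finite (Ch M k nu) \<and>
    (M \<ge> 2 \<longrightarrow> card (Ch M k nu) = (\<Sum>lam \<in> boxL (M - 1) (IntS nu). card (Ch (M - 1) k lam)))"
  using assms
proof (induction M arbitrary: nu rule: nat_induct_at_least)
  case base
  then show ?case by (simp add: Ch_1)
next
  case (Suc n)
  have fin: "\<And>lam. lam \<in> boxL n (IntS nu) \<Longrightarrow> finite (Ch n k lam)"
    using Suc.IH boxL_sig by blast
  have eq: "Ch (Suc n) k nu = (\<Union>lam \<in> boxL n (IntS nu). (\<lambda>ls. ls @ [nu]) ` Ch n k lam)"
    using Ch_step[of "Suc n" nu k] Suc by simp
  have disj: "\<forall>a\<in>boxL n (IntS nu). \<forall>b\<in>boxL n (IntS nu). a \<noteq> b \<longrightarrow>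
      ((\<lambda>ls. ls @ [nu]) ` Ch n k a) \<inter> ((\<lambda>ls. ls @ [nu]) ` Ch n k b) = {}"
  proof (intro ballI impI)
    fix a b :: "int list" assume "a \<noteq> b"
    show "((\<lambda>ls. ls @ [nu]) ` Ch n k a) \<inter> ((\<lambda>ls. ls @ [nu]) ` Ch n k b) = {}"
    proof (rule ccontr)
      assume "((\<lambda>ls. ls @ [nu]) ` Ch n k a) \<inter> ((\<lambda>ls. ls @ [nu]) ` Ch n k b) \<noteq> {}"
      then obtain x y where x: "x \<in> Ch n k a" and y: "y \<in> Ch n k b" and "x @ [nu] = y @ [nu]" by blast
      then have "x = y" by simp
      then show False using x y \<open>a \<noteq> b\<close> by (simp add: Ch_def)
    qed
  qed
  have "finite (Ch (Suc n) k nu)" unfolding eq using fin finite_boxL_IntS by blast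
  moreover have "card (Ch (Suc n) k nu) = (\<Sum>lam \<in> boxL n (IntS nu). card (Ch n k lam))"
    unfolding eq
    by (subst card_UN_disjoint[OF finite_boxL_IntS _ disj]) (auto simp: fin card_image inj_on_def)
  ultimately show ?case by simp
qed

lemma DimKN_step:
  assumes "M \<ge> 2" "nu \<in> sig M"
  shows "DimKN 1 M [k] nu = (\<Sum>lam \<in> boxL (M - 1) (IntS nu). DimKN 1 (M - 1) [k] lam)"
  using Ch_finite_card[of M nu k] assms by (simp add: DimKN_Ch DimKN_Ch')

lemma DimKN_1: "DimKN 1 (Suc 0) [k] nu = (if nu = [k] then 1 else 0)"
  by (simp add: DimKN_Ch DimKN_Ch' Ch_1)

lemma DimKN_support:
  assumes "M \<ge> 1" "nu \<in> sig M" "DimKN 1 M [k] nu \<noteq> 0"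
  shows "nu ! (M - 1) \<le> k \<and> k \<le> nu ! 0"
  using assms
proof (induction M arbitrary: nu rule: nat_induct_at_least)
  case base
  then show ?case by (simp add: DimKN_1 DimKN_Ch' Ch_1 split: if_splits)
next
  case (Suc n)
  from Suc.prems DimKN_step[of "Suc n" nu k] Suc.hyps obtain lam where
    lam: "lam \<in> boxL n (IntS nu)" and nz: "DimKN 1 n [k] lam \<noteq> 0"
  proof -
    have "DimKN 1 (Suc n) [k] nu = (\<Sum>lam \<in> boxL n (IntS nu). DimKN 1 n [k] lam)"
      using DimKN_step[of "Suc n" nu k] Suc.prems Suc.hyps by simp
    with Suc.prems(2) have "(\<Sum>lam \<in> boxL n (IntS nu). DimKN 1 n [k] lam) \<noteq> 0" by simp
    then show ?thesis using that by (meson sum.neutral)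
  qed
  have "lam ! (n - 1) \<le> k \<and> k \<le> lam ! 0" using Suc.IH[OF boxL_sig[OF lam] nz] .
  moreover have "lam ! (n - 1) \<ge> nu ! n"
  proof -
    have "lam ! (n - 1) \<in> IntS nu (n - 1)" using lam Suc.hyps by (simp add: boxL_def)
    then show ?thesis using Suc.hyps by (simp add: IntS_def)
  qed
  moreover have "lam ! 0 \<le> nu ! 0" using lam Suc.hyps by (auto simp: boxL_def IntS_def)
  ultimately show ?case by simp
qed

lemma rep_sig: "replicate n (0::int) \<in> sig n"
  unfolding sig_def by (auto simp del: replicate.simps)

lemma rep_box: "replicate n (0::int) \<in> boxL n (IntS (replicate (Suc n) 0))"
  unfolding boxL_def IntS_def
  by (auto simp del: replicate.simps)

lemma DimKN_zero:
  assumes "M \<ge> 1"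
  shows "DimKN 1 M [0] (replicate M 0) = 1"
  using assms
proof (induction M rule: nat_induct_at_least)
  case base
  then show ?case by (simp add: DimKN_Ch' Ch_1)
next
  case (Suc n)
  have "boxL n (IntS (replicate (Suc n) 0)) = {replicate n 0}"
  proof (intro equalityI subsetI)
    fix x assume x: "x \<in> boxL n (IntS (replicate (Suc n) 0))"
    show "x \<in> {replicate n 0}"
    proof (simp, intro nth_equalityI)
      show "length x = length (replicate n 0)" using x by (simp add: boxL_def)
      fix i assume "i < length x"
      then have "x ! i \<in> IntS (replicate (Suc n) 0) i" "i < n" using x by (auto simp: boxL_def)
      then show "x ! i = replicate n 0 ! i" by (simp add: IntS_def del: replicate.simps)
    qed
  next
    fix x assume "x \<in> {replicate n (0::int)}"
    then show "x \<in> boxL n (IntS (replicate (Suc n) 0))" using rep_box by simp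
  qed
  moreover have "replicate (Suc n) 0 \<in> sig (Suc n)" by (rule rep_sig)
  ultimately show ?case using DimKN_step[of "Suc n" "replicate (Suc n) 0" 0] Suc by simp
qed


lemma boxL_Suc:
  "boxL (Suc n) S = (\<lambda>(xs, x). xs @ [x]) ` (boxL n S \<times> S n)"
proof (intro equalityI subsetI)
  fix ys assume ys: "ys \<in> boxL (Suc n) S"
  then have len: "length ys = Suc n" by (simp add: boxL_def)
  then have "ys = butlast ys @ [last ys]" by (metis append_butlast_last_id list.size(3) nat.distinct(1))
  moreover have "butlast ys \<in> boxL n S" using ys len by (auto simp: boxL_def nth_butlast)
  moreover have "last ys \<in> S n"
  proof -
    have "ys \<noteq> []" using len by auto
    then have "last ys = ys ! n" using len by (simp add: last_conv_nth)
    then show ?thesis using ys by (simp add: boxL_def)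
  qed
  ultimately show "ys \<in> (\<lambda>(xs, x). xs @ [x]) ` (boxL n S \<times> S n)" by force
next
  fix ys assume "ys \<in> (\<lambda>(xs, x). xs @ [x]) ` (boxL n S \<times> S n)"
  then obtain xs x where "ys = xs @ [x]" "xs \<in> boxL n S" "x \<in> S n" by auto
  then show "ys \<in> boxL (Suc n) S" by (auto simp: boxL_def nth_append less_Suc_eq)
qed

lemma prod_sum_boxL:
  fixes g :: "nat \<Rightarrow> int \<Rightarrow> 'a :: comm_semiring_1"
  assumes "\<And>j. j < n \<Longrightarrow> finite (S j)"
  shows "(\<Prod>j<n. \<Sum>x\<in>S j. g j x) = (\<Sum>xs\<in>boxL n S. \<Prod>j<n. g j (xs ! j))"
  using assms
proof (induction n)
  case 0
  have "boxL 0 S = {[]}" by (auto simp: boxL_def)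
  then show ?case by simp
next
  case (Suc n)
  have inj: "inj_on (\<lambda>(xs, x). xs @ [x]) (boxL n S \<times> S n)" by (auto simp: inj_on_def)
  have "(\<Prod>j<Suc n. \<Sum>x\<in>S j. g j x) = (\<Prod>j<n. \<Sum>x\<in>S j. g j x) * (\<Sum>x\<in>S n. g n x)" by simp
  also have "\<dots> = (\<Sum>xs\<in>boxL n S. \<Prod>j<n. g j (xs ! j)) * (\<Sum>x\<in>S n. g n x)" using Suc by simp
  also have "\<dots> = (\<Sum>xs\<in>boxL n S. \<Sum>x\<in>S n. (\<Prod>j<n. g j (xs ! j)) * g n x)"
    by (rule sum_product)
  also have "\<dots> = (\<Sum>(xs,x)\<in>boxL n S \<times> S n. \<Prod>j<Suc n. g j ((xs @ [x]) ! j))"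
    unfolding sum.cartesian_product[symmetric]
  proof (intro sum.cong refl)
    fix xs x assume "xs \<in> boxL n S"
    then have len: "length xs = n" by (simp add: boxL_def)
    have "(\<Prod>j<Suc n. g j ((xs @ [x]) ! j)) = (\<Prod>j<n. g j ((xs @ [x]) ! j)) * g n x"
      using len by (simp add: nth_append)
    also have "(\<Prod>j<n. g j ((xs @ [x]) ! j)) = (\<Prod>j<n. g j (xs ! j))"
      using len by (intro prod.cong) (auto simp: nth_append)
    finally show "(\<Prod>j<n. g j (xs ! j)) * g n x = (\<Prod>j<Suc n. g j ((xs @ [x]) ! j))" by simp
  qed
  also have "\<dots> = (\<Sum>ys\<in>boxL (Suc n) S. \<Prod>j<Suc n. g j (ys ! j))"
    unfolding boxL_Suc by (subst sum.reindex[OF inj]) (simp add: case_prod_beta)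
  finally show ?case .
qed

lemma det_sum_rows:
  fixes F :: "nat \<Rightarrow> int \<Rightarrow> nat \<Rightarrow> 'a :: comm_ring_1"
  assumes "\<And>j. j < n \<Longrightarrow> finite (S j)"
  shows "det (mat n n (\<lambda>(j, i). \<Sum>x\<in>S j. F j x i)) =
    (\<Sum>xs\<in>boxL n S. det (mat n n (\<lambda>(j, i). F j (xs ! j) i)))"
proof -
  have fin: "finite (boxL n S)" using finite_boxL assms by blast
  have "det (mat n n (\<lambda>(j, i). \<Sum>x\<in>S j. F j x i)) =
    (\<Sum>p\<in>{p. p permutes {0..<n}}. signof p * (\<Prod>j<n. \<Sum>x\<in>S j. F j x (p j)))"
    by (subst det_def'[of _ n]) (auto simp: atLeast0LessThan intro!: sum.cong prod.cong
        simp: permutes_in_image[of _ "{0..<n}"])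
  also have "\<dots> = (\<Sum>p\<in>{p. p permutes {0..<n}}. \<Sum>xs\<in>boxL n S. signof p * (\<Prod>j<n. F j (xs ! j) (p j)))"
    by (subst prod_sum_boxL[OF assms]) (auto simp: sum_distrib_left)
  also have "\<dots> = (\<Sum>xs\<in>boxL n S. \<Sum>p\<in>{p. p permutes {0..<n}}. signof p * (\<Prod>j<n. F j (xs ! j) (p j)))"
    by (rule sum.swap)
  also have "\<dots> = (\<Sum>xs\<in>boxL n S. det (mat n n (\<lambda>(j, i). F j (xs ! j) i)))"
  proof (rule sum.cong[OF refl])
    fix xs
    show "(\<Sum>p\<in>{p. p permutes {0..<n}}. signof p * (\<Prod>j<n. F j (xs ! j) (p j))) =
        det (mat n n (\<lambda>(j, i). F j (xs ! j) i))"
      by (subst det_def'[of _ n]) (auto simp: atLeast0LessThan intro!: sum.cong prod.cong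
        simp: permutes_in_image[of _ "{0..<n}"])
  qed
  finally show ?thesis .
qed

lemma det_scale_rows:
  fixes B :: "nat \<Rightarrow> nat \<Rightarrow> 'a :: comm_ring_1"
  shows "det (mat n n (\<lambda>(j, i). a j * B j i)) = (\<Prod>j<n. a j) * det (mat n n (\<lambda>(j, i). B j i))"
proof -
  have "det (mat n n (\<lambda>(j, i). a j * B j i)) =
    (\<Sum>p\<in>{p. p permutes {0..<n}}. signof p * (\<Prod>j<n. a j * B j (p j)))"
    by (subst det_def'[of _ n]) (auto simp: atLeast0LessThan intro!: sum.cong prod.cong
        simp: permutes_in_image[of _ "{0..<n}"])
  also have "\<dots> = (\<Sum>p\<in>{p. p permutes {0..<n}}. (\<Prod>j<n. a j) * (signof p * (\<Prod>j<n. B j (p j))))"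
    by (simp add: prod.distrib mult_ac)
  also have "\<dots> = (\<Prod>j<n. a j) * det (mat n n (\<lambda>(j, i). B j i))"
    by (subst det_def'[of _ n]) (auto simp: atLeast0LessThan sum_distrib_left intro!: sum.cong prod.cong
        simp: permutes_in_image[of _ "{0..<n}"])
  finally show ?thesis .
qed

lemma mult_entry:
  assumes "A \<in> carrier_mat n k" "B \<in> carrier_mat k m" "i < n" "j < m"
  shows "(A * B) $$ (i, j) = (\<Sum>r<k. A $$ (i, r) * B $$ (r, j))"
  using assms by (simp add: scalar_prod_def atLeast0LessThan)

definition bidiag :: "nat \<Rightarrow> 'a :: comm_ring_1 \<Rightarrow> 'a mat" where
  "bidiag n a = mat n n (\<lambda>(i, j). if i = j then 1 else if j = Suc i then a else 0)"

lemma bidiag_carrier: "bidiag n a \<in> carrier_mat n n"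
  by (simp add: bidiag_def)

lemma bidiag_dim[simp]: "dim_row (bidiag n a) = n" "dim_col (bidiag n a) = n"
  by (simp_all add: bidiag_def)

lemma det_bidiag: "det (bidiag n a) = 1"
proof -
  have "det (bidiag n a) = prod_list (diag_mat (bidiag n a))"
    by (rule det_upper_triangular) (auto simp: bidiag_def upper_triangular_def)
  also have "diag_mat (bidiag n a) = replicate n 1"
    by (auto simp: diag_mat_def bidiag_def intro!: nth_equalityI)
  finally show ?thesis by simp
qed

lemma bidiag_mult_entry:
  assumes C: "C \<in> carrier_mat n m" and j: "j < n" and k: "k < m"
  shows "(bidiag n a * C) $$ (j, k) = C $$ (j, k) + (if Suc j < n then a * C $$ (Suc j, k) else 0)"
proof -
  have "(bidiag n a * C) $$ (j, k) = (\<Sum>r<n. bidiag n a $$ (j, r) * C $$ (r, k))"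
    by (rule mult_entry[OF bidiag_carrier C j k])
  also have "\<dots> = (\<Sum>r<n. (if r = j then C $$ (j, k) else 0) + (if r = Suc j then a * C $$ (Suc j, k) else 0))"
    by (intro sum.cong refl) (use j in \<open>auto simp: bidiag_def\<close>)
  also have "\<dots> = C $$ (j, k) + (if Suc j < n then a * C $$ (Suc j, k) else 0)"
    by (simp add: sum.distrib j)
  finally show ?thesis .
qed

lemma mult_bidiag_entry:
  assumes C: "C \<in> carrier_mat m n" and j: "j < m" and k: "k < n"
  shows "(C * bidiag n a) $$ (j, k) = C $$ (j, k) + (if k > 0 then a * C $$ (j, k - 1) else 0)"
proof -
  have "(C * bidiag n a) $$ (j, k) = (\<Sum>r<n. C $$ (j, r) * bidiag n a $$ (r, k))"
    by (rule mult_entry[OF C bidiag_carrier j k])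
  also have "\<dots> = (\<Sum>r<n. (if r = k then C $$ (j, k) else 0) + (if Suc r = k then a * C $$ (j, k - 1) else 0))"
    by (intro sum.cong refl) (use k in \<open>auto simp: bidiag_def\<close>)
  also have "\<dots> = C $$ (j, k) + (if k > 0 then a * C $$ (j, k - 1) else 0)"
  proof -
    have "(\<Sum>r<n. (if Suc r = k then a * C $$ (j, k - 1) else 0)) = (if k > 0 then a * C $$ (j, k - 1) else 0)"
    proof (cases k)
      case 0 then show ?thesis by simp
    next
      case (Suc k') then show ?thesis using k by (simp add: sum.delta')
    qed
    then show ?thesis by (simp add: sum.distrib k)
  qed
  finally show ?thesis .
qed

definition ins :: "nat \<Rightarrow> nat \<Rightarrow> nat" where
  "ins c i = (if i < c then i else Suc i)"

lemma det_ones_col: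
  fixes C :: "'a :: comm_ring_1 mat"
  assumes C: "C \<in> carrier_mat (Suc m) (Suc m)" and c: "c < Suc m"
    and ones: "\<And>j. j < Suc m \<Longrightarrow> C $$ (j, c) = 1"
  shows "det C = (-1) ^ (m + c) *
    det (mat m m (\<lambda>(j, i). C $$ (j, ins c i) - C $$ (Suc j, ins c i)))"
proof -
  let ?E = "bidiag (Suc m) (-1 :: 'a)"
  let ?D = "?E * C"
  have D: "?D \<in> carrier_mat (Suc m) (Suc m)" by (rule mult_carrier_mat[OF bidiag_carrier C])
  have "det ?D = det ?E * det C" by (rule det_mult[OF bidiag_carrier C])
  then have dC: "det C = det ?D" by (simp add: det_bidiag)
  have Dc: "?D $$ (j, c) = (if j = m then 1 else 0)" if "j < Suc m" for j
    using bidiag_mult_entry[OF C that c, of "-1"] ones that by auto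
  have "det ?D = (\<Sum>j<Suc m. ?D $$ (j, c) * cofactor ?D j c)"
    by (rule laplace_expansion_column[OF D c])
  also have "\<dots> = (\<Sum>j<Suc m. if j = m then cofactor ?D j c else 0)"
    by (intro sum.cong refl) (simp add: Dc)
  also have "\<dots> = cofactor ?D m c" by simp
  also have "\<dots> = (-1) ^ (m + c) * det (mat_delete ?D m c)" by (simp add: cofactor_def)
  also have "mat_delete ?D m c = mat m m (\<lambda>(j, i). C $$ (j, ins c i) - C $$ (Suc j, ins c i))"
  proof (rule eq_matI)
    fix j i assume j: "j < dim_row (mat m m (\<lambda>(j, i). C $$ (j, ins c i) - C $$ (Suc j, ins c i)))"
      and i: "i < dim_col (mat m m (\<lambda>(j, i). C $$ (j, ins c i) - C $$ (Suc j, ins c i)))"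
    have ii: "ins c i < Suc m" using i c by (auto simp: ins_def)
    have "mat_delete ?D m c $$ (j, i) = ?D $$ (j, ins c i)"
      using j i C by (simp add: mat_delete_def ins_def)
    also have "\<dots> = C $$ (j, ins c i) - C $$ (Suc j, ins c i)"
      using bidiag_mult_entry[OF C _ ii, of j "-1"] j by simp
    finally show "mat_delete ?D m c $$ (j, i) = mat m m (\<lambda>(j, i). C $$ (j, ins c i) - C $$ (Suc j, ins c i)) $$ (j, i)"
      using j i by simp
  qed (use C in auto)
  finally show ?thesis using dC by simp
qed



lemma vandermonde:
  fixes x :: "nat \<Rightarrow> 'a :: comm_ring_1"
  shows "det (mat n n (\<lambda>(j, i). x j ^ i)) = (\<Prod>i<n. \<Prod>j\<in>{i<..<n}. (x j - x i))"
proof (induction n arbitrary: x)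
  case 0
  then show ?case by (simp add: det_def)
next
  case (Suc n)
  let ?V = "mat (Suc n) (Suc n) (\<lambda>(j, i). x j ^ i)"
  let ?F = "bidiag (Suc n) (- x 0)"
  let ?W = "?V * ?F"
  have V: "?V \<in> carrier_mat (Suc n) (Suc n)" by simp
  have W: "?W \<in> carrier_mat (Suc n) (Suc n)" by (rule mult_carrier_mat[OF V bidiag_carrier])
  have "det ?W = det ?V * det ?F" by (rule det_mult[OF V bidiag_carrier])
  then have dV: "det ?V = det ?W" by (simp add: det_bidiag)
  have We: "?W $$ (j, k) = x j ^ k + (if k > 0 then - x 0 * x j ^ (k - 1) else 0)"
    if "j < Suc n" "k < Suc n" for j k
    using mult_bidiag_entry[OF V that, of "- x 0"] that by simp
  have W0: "?W $$ (0, k) = (if k = 0 then 1 else 0)" if "k < Suc n" for k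
  proof (cases k)
    case 0 then show ?thesis using We[of 0 k] that by simp
  next
    case (Suc k') then show ?thesis using We[of 0 k] that by simp
  qed
  have "det ?W = (\<Sum>k<Suc n. ?W $$ (0, k) * cofactor ?W 0 k)"
    by (rule laplace_expansion_row[OF W]) simp
  also have "\<dots> = (\<Sum>k<Suc n. if k = 0 then cofactor ?W 0 k else 0)"
  proof (rule sum.cong[OF refl])
    fix k assume "k \<in> {..<Suc n}"
    then have w: "?W $$ (0, k) = (if k = 0 then 1 else 0)" using W0 by simp
    show "?W $$ (0, k) * cofactor ?W 0 k = (if k = 0 then cofactor ?W 0 k else 0)"
      by (simp only: w) simp
  qed
  also have "\<dots> = cofactor ?W 0 0" by simp
  also have "\<dots> = det (mat_delete ?W 0 0)" by (simp add: cofactor_def)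
  also have "mat_delete ?W 0 0 = mat n n (\<lambda>(j, i). (x (Suc j) - x 0) * (x (Suc j)) ^ i)"
  proof (rule eq_matI)
    fix j i assume j: "j < dim_row (mat n n (\<lambda>(j, i). (x (Suc j) - x 0) * (x (Suc j)) ^ i))"
      and i: "i < dim_col (mat n n (\<lambda>(j, i). (x (Suc j) - x 0) * (x (Suc j)) ^ i))"
    have "mat_delete ?W 0 0 $$ (j, i) = ?W $$ (Suc j, Suc i)"
      using j i by (simp add: mat_delete_def)
    also have "\<dots> = (x (Suc j) - x 0) * (x (Suc j)) ^ i"
      using We[of "Suc j" "Suc i"] j i by (simp add: algebra_simps)
    finally show "mat_delete ?W 0 0 $$ (j, i) = mat n n (\<lambda>(j, i). (x (Suc j) - x 0) * (x (Suc j)) ^ i) $$ (j, i)"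
      using j i by simp
  qed (auto simp: mat_delete_def)
  also have "det \<dots> = (\<Prod>j<n. (x (Suc j) - x 0)) * det (mat n n (\<lambda>(j, i). (x (Suc j)) ^ i))"
    by (rule det_scale_rows)
  also have "det (mat n n (\<lambda>(j, i). (x (Suc j)) ^ i)) = (\<Prod>i<n. \<Prod>j\<in>{i<..<n}. (x (Suc j) - x (Suc i)))"
    using Suc.IH[of "\<lambda>j. x (Suc j)"] by simp
  also have "(\<Prod>j<n. (x (Suc j) - x 0)) * (\<Prod>i<n. \<Prod>j\<in>{i<..<n}. (x (Suc j) - x (Suc i))) =
      (\<Prod>i<Suc n. \<Prod>j\<in>{i<..<Suc n}. (x j - x i))"
  proof -
    have s0: "{0<..<Suc n} = Suc ` {..<n}"
    proof (intro equalityI subsetI)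
      fix y assume "y \<in> {0<..<Suc n}"
      then obtain z where "y = Suc z" "z < n" by (cases y) auto
      then show "y \<in> Suc ` {..<n}" by auto
    qed auto
    have s1: "{Suc i<..<Suc n} = Suc ` {i<..<n}" for i
    proof (intro equalityI subsetI)
      fix y assume "y \<in> {Suc i<..<Suc n}"
      then obtain z where "y = Suc z" "i < z" "z < n" by (cases y) auto
      then show "y \<in> Suc ` {i<..<n}" by auto
    qed auto
    have a: "(\<Prod>j\<in>{0<..<Suc n}. (x j - x 0)) = (\<Prod>j<n. (x (Suc j) - x 0))"
      unfolding s0 by (subst prod.reindex) auto
    have b: "(\<Prod>j\<in>{Suc i<..<Suc n}. (x j - x (Suc i))) = (\<Prod>j\<in>{i<..<n}. (x (Suc j) - x (Suc i)))" for i
      unfolding s1 by (subst prod.reindex) auto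
    show ?thesis by (simp only: prod.lessThan_Suc_shift a b)
  qed
  finally show ?case using dV by simp
qed

lemma det_poly_rows:
  fixes Q :: "nat \<Rightarrow> 'a :: comm_ring_1 poly"
  assumes deg: "\<And>i. i < n \<Longrightarrow> degree (Q i) \<le> i"
  shows "det (mat n n (\<lambda>(j, i). poly (Q i) (x j))) = (\<Prod>i<n. coeff (Q i) i) * det (mat n n (\<lambda>(j, i). x j ^ i))"
proof -
  let ?V = "mat n n (\<lambda>(j, i). x j ^ i)"
  let ?C = "mat n n (\<lambda>(d, i). coeff (Q i) d)"
  have V: "?V \<in> carrier_mat n n" and C: "?C \<in> carrier_mat n n" by auto
  have eq: "mat n n (\<lambda>(j, i). poly (Q i) (x j)) = ?V * ?C"
  proof (rule eq_matI)
    fix j i assume j: "j < dim_row (?V * ?C)" and i: "i < dim_col (?V * ?C)"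
    have "(?V * ?C) $$ (j, i) = (\<Sum>d<n. ?V $$ (j, d) * ?C $$ (d, i))"
      by (rule mult_entry[OF V C]) (use i j in auto)
    also have "\<dots> = (\<Sum>d<n. coeff (Q i) d * x j ^ d)"
      using i j by (intro sum.cong refl) (auto simp: mult.commute)
    also have "\<dots> = (\<Sum>d\<le>degree (Q i). coeff (Q i) d * x j ^ d)"
    proof (rule sum.mono_neutral_right)
      show "{..degree (Q i)} \<subseteq> {..<n}" using deg[of i] i by auto
      show "\<forall>d\<in>{..<n} - {..degree (Q i)}. coeff (Q i) d * x j ^ d = 0"
        by (auto simp: coeff_eq_0)
    qed auto
    also have "\<dots> = poly (Q i) (x j)" by (simp add: poly_altdef)
    finally show "mat n n (\<lambda>(j, i). poly (Q i) (x j)) $$ (j, i) = (?V * ?C) $$ (j, i)"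
      using i j by simp
  qed auto
  have "det ?C = prod_list (diag_mat ?C)"
  proof (rule det_upper_triangular[OF _ C])
    show "upper_triangular ?C"
      unfolding upper_triangular_def
    proof (intro allI impI ballI)
      fix d i assume "d < dim_row ?C" "i < d"
      then show "?C $$ (d, i) = 0" using deg[of i] by (auto simp: coeff_eq_0)
    qed
  qed
  also have "\<dots> = (\<Prod>i<n. coeff (Q i) i)" by (simp add: prod_list_diag_prod atLeast0LessThan)
  finally show ?thesis unfolding eq det_mult[OF V C] by (simp add: mult.commute)
qed



type_synonym K = "rat poly fract"

definition emb :: "rat \<Rightarrow> K" where "emb q = to_fract [:q:]"

lemma emb_add[simp]: "emb (a + b) = emb a + emb b"
proof -
  have "[:a + b:] = [:a:] + [:b:]" by simp
  then show ?thesis unfolding emb_def by (simp only: to_fract_add)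
qed
lemma emb_mult[simp]: "emb (a * b) = emb a * emb b"
  by (simp add: emb_def flip: to_fract_mult)
lemma emb_diff[simp]: "emb (a - b) = emb a - emb b"
proof -
  have "[:a - b:] = [:a:] - [:b:]" by simp
  then show ?thesis unfolding emb_def by (simp only: to_fract_diff)
qed
lemma emb_minus[simp]: "emb (- a) = - emb a"
proof -
  have "[:- a:] = - [:a:]" by simp
  then show ?thesis unfolding emb_def by (simp only: to_fract_uminus)
qed
lemma emb_0[simp]: "emb 0 = 0" by (simp add: emb_def)
lemma emb_1[simp]: "emb 1 = 1" by (simp add: emb_def one_pCons[symmetric])
lemma emb_eq_iff[simp]: "emb a = emb b \<longleftrightarrow> a = b" by (simp add: emb_def)
lemma emb_eq_0_iff[simp]: "emb a = 0 \<longleftrightarrow> a = 0" by (simp add: emb_def)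
lemma emb_of_nat[simp]: "emb (of_nat n) = of_nat n"
  by (induction n) (simp_all)
lemma emb_of_int[simp]: "emb (of_int n) = of_int n"
  by (induction n) (simp_all)
lemma emb_divide[simp]: "emb (a / b) = emb a / emb b"
proof (cases "b = 0")
  case True then show ?thesis by simp
next
  case False
  have "emb a = emb (a / b) * emb b" using False by (simp flip: emb_mult)
  then show ?thesis using False by (simp add: field_simps)
qed
lemma emb_prod[simp]: "emb (prod f A) = (\<Prod>x\<in>A. emb (f x))"
  by (induction A rule: infinite_finite_induct) simp_all
lemma emb_sum[simp]: "emb (sum f A) = (\<Sum>x\<in>A. emb (f x))"
  by (induction A rule: infinite_finite_induct) simp_all

definition tt :: K where "tt = to_fract [:0, 1:]"

lemma to_fract_lin: "to_fract [:a, 1:] = tt + emb a"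
proof -
  have "[:a, 1:] = [:0, 1:] + [:a:]" by simp
  then show ?thesis unfolding tt_def emb_def by (simp only: to_fract_add)
qed

lemma tt_plus_nz: "tt + emb a \<noteq> 0"
  by (simp flip: to_fract_lin)

lemma of_int_K: "(of_int c :: K) = emb (of_int c)" by simp
lemma of_nat_K: "(of_nat c :: K) = emb (of_nat c)" by simp

lemma tt_int_nz: "tt - of_int x + of_nat i \<noteq> 0"
proof -
  have "tt - of_int x + of_nat i = tt + emb (of_nat i - of_int x)" by simp
  then show ?thesis using tt_plus_nz by metis
qed

lemma tt_int_nz': "tt + of_int x \<noteq> 0"
  using tt_plus_nz[of "of_int x"] by simp

lemma of_nat_K_nz: "n > 0 \<Longrightarrow> (of_nat n :: K) \<noteq> 0"
proof -
  assume "n > 0"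
  then have "emb (of_nat n) \<noteq> 0" by simp
  then show ?thesis by simp
qed

lemma fact_K_nz: "(of_nat (fact n) :: K) \<noteq> 0"
  by (rule of_nat_K_nz) simp

definition hh :: "nat \<Rightarrow> int \<Rightarrow> K" where
  "hh r x = of_nat (fact r) / (\<Prod>i<Suc r. (tt - of_int x + of_nat i))"

definition pp :: "nat \<Rightarrow> int \<Rightarrow> K" where
  "pp i x = (\<Prod>a<i. (of_int x + of_nat (Suc a))) / of_nat (fact i)"

lemma hh_diff: "hh r x - hh r (x - 1) = hh (Suc r) x"
proof -
  define d where "d i = tt - of_int x + of_nat i" for i
  have dnz: "d i \<noteq> 0" for i unfolding d_def by (rule tt_int_nz)
  define B where "B = (\<Prod>i<r. d (Suc i))"
  have Bnz: "B \<noteq> 0" unfolding B_def using dnz by (simp add: prod_zero_iff)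
  have p1: "(\<Prod>i<Suc r. d i) = d 0 * B" unfolding B_def by (rule prod.lessThan_Suc_shift)
  have p2: "(\<Prod>i<Suc r. (tt - of_int (x - 1) + of_nat i)) = B * d (Suc r)"
  proof -
    have "(\<Prod>i<Suc r. (tt - of_int (x - 1) + of_nat i)) = (\<Prod>i<Suc r. d (Suc i))"
      by (intro prod.cong refl) (simp add: d_def)
    then show ?thesis unfolding B_def by simp
  qed
  have p3: "(\<Prod>i<Suc (Suc r). d i) = d 0 * B * d (Suc r)"
  proof -
    have "(\<Prod>i<Suc (Suc r). d i) = d 0 * (\<Prod>i<Suc r. d (Suc i))" by (rule prod.lessThan_Suc_shift)
    also have "(\<Prod>i<Suc r. d (Suc i)) = B * d (Suc r)" unfolding B_def by (rule prod.lessThan_Suc)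
    finally show ?thesis by (simp add: mult.assoc)
  qed
  have dd: "d (Suc r) - d 0 = of_nat (Suc r)" by (simp add: d_def)
  have q: "(\<Prod>i<Suc r. (tt - of_int x + of_nat i)) = (\<Prod>i<Suc r. d i)" by (simp add: d_def)
  have h1: "hh r x = of_nat (fact r) / (d 0 * B)" by (simp only: hh_def q p1)
  have h2: "hh r (x - 1) = of_nat (fact r) / (B * d (Suc r))" by (simp only: hh_def p2)
  have "hh r x - hh r (x - 1) = of_nat (fact r) / (d 0 * B) - of_nat (fact r) / (B * d (Suc r))"
    by (simp only: h1 h2)
  also have "\<dots> = of_nat (fact r) * (d (Suc r) - d 0) / (d 0 * B * d (Suc r))"
    using dnz Bnz by (simp add: field_simps)
  also have "\<dots> = of_nat (fact (Suc r)) / (d 0 * B * d (Suc r))"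
    by (simp add: dd algebra_simps)
  also have "\<dots> = hh (Suc r) x"
  proof -
    have q3: "(\<Prod>i<Suc (Suc r). (tt - of_int x + of_nat i)) = (\<Prod>i<Suc (Suc r). d i)" by (simp add: d_def)
    show ?thesis by (simp only: hh_def q3 p3)
  qed
  finally show ?thesis .
qed

lemma pp_diff: "pp (Suc i) x - pp (Suc i) (x - 1) = pp i x"
proof -
  define e where "e a = (of_int x :: K) + of_nat a" for a
  define B where "B = (\<Prod>a<i. e (Suc a))"
  have p1: "(\<Prod>a<Suc i. ((of_int x :: K) + of_nat (Suc a))) = B * e (Suc i)"
    unfolding B_def e_def by simp
  have p2: "(\<Prod>a<Suc i. ((of_int (x - 1) :: K) + of_nat (Suc a))) = e 0 * B"
  proof -
    have "(\<Prod>a<Suc i. ((of_int (x - 1) :: K) + of_nat (Suc a))) = (\<Prod>a<Suc i. e a)"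
      by (intro prod.cong refl) (simp add: e_def)
    also have "(\<Prod>a<Suc i. e a) = e 0 * B" unfolding B_def by (rule prod.lessThan_Suc_shift)
    finally show ?thesis .
  qed
  have ee: "e (Suc i) - e 0 = of_nat (Suc i)" by (simp add: e_def)
  have fnz: "(of_nat (fact i) :: K) \<noteq> 0" by (rule fact_K_nz)
  have snz: "(of_nat (Suc i) :: K) \<noteq> 0" by (rule of_nat_K_nz) simp
  have "pp (Suc i) x - pp (Suc i) (x - 1) = (B * e (Suc i) - e 0 * B) / of_nat (fact (Suc i))"
    unfolding pp_def p1 p2 by (simp add: diff_divide_distrib)
  also have "\<dots> = B * of_nat (Suc i) / of_nat (fact (Suc i))"
  proof -
    have "B * e (Suc i) - e 0 * B = B * (e (Suc i) - e 0)" by (simp add: algebra_simps)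
    then show ?thesis by (simp only: ee)
  qed
  also have "\<dots> = B / of_nat (fact i)"
  proof -
    have "(of_nat (fact (Suc i)) :: K) = of_nat (Suc i) * of_nat (fact i)"
      by (simp only: fact_Suc of_nat_mult of_nat_id)
    then show ?thesis by (simp only: mult.commute[of B] mult_divide_mult_cancel_left[OF snz])
  qed
  also have "\<dots> = pp i x" unfolding pp_def B_def e_def by simp
  finally show ?thesis .
qed

lemma pp_0[simp]: "pp 0 x = 1" by (simp add: pp_def)

lemma tele:
  fixes f F :: "int \<Rightarrow> 'a :: ab_group_add"
  assumes d: "\<And>y. F y - F (y - 1) = f y" and ab: "a \<le> b + 1"
  shows "(\<Sum>x\<in>{a..b}. f x) = F b - F (a - 1)"
proof -
  have "(\<Sum>x\<in>{a..a + int n - 1}. f x) = F (a + int n - 1) - F (a - 1)" for n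
  proof (induction n)
    case 0 then show ?case by simp
  next
    case (Suc n)
    have "{a..a + int (Suc n) - 1} = insert (a + int n) {a..a + int n - 1}" by auto
    then have "(\<Sum>x\<in>{a..a + int (Suc n) - 1}. f x) = f (a + int n) + (\<Sum>x\<in>{a..a + int n - 1}. f x)"
      by simp
    also have "\<dots> = F (a + int (Suc n) - 1) - F (a - 1)"
      using Suc d[of "a + int n"] by (simp add: algebra_simps)
    finally show ?case .
  qed
  from this[of "nat (b - a + 1)"] show ?thesis using ab by simp
qed



definition Amat :: "nat \<Rightarrow> nat \<Rightarrow> (nat \<Rightarrow> int) \<Rightarrow> K mat" where
  "Amat N M l = mat M M (\<lambda>(j, i). if i = 0 then hh (N - M) (l j) else pp (i - 1) (l j))"

definition lv :: "int list \<Rightarrow> nat \<Rightarrow> int" where "lv nu j = nu ! j - int j - 1"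

definition D :: "nat \<Rightarrow> nat \<Rightarrow> int list \<Rightarrow> K" where "D N M nu = det (Amat N M (lv nu))"

lemma sig_mono: "nu \<in> sig M \<Longrightarrow> j + 1 < M \<Longrightarrow> nu ! (j + 1) \<le> nu ! j"
  by (simp add: sig_def)

lemma D_branch:
  assumes M2: "2 \<le> M" and MN: "M \<le> N" and nu: "nu \<in> sig M"
  shows "(\<Sum>lam\<in>boxL (M - 1) (IntS nu). D N (M - 1) lam) = (-1) ^ M * D N M nu"
proof -
  obtain m where M: "M = Suc m" and m1: "1 \<le> m" using M2 by (cases M) auto
  define F where "F j x i = (if i = 0 then hh (N - m) (x - int j - 1) else pp (i - 1) (x - int j - 1))" for j x i
  let ?C = "Amat N M (lv nu)"
  have C: "?C \<in> carrier_mat (Suc m) (Suc m)" by (simp add: Amat_def M)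
  have fin: "\<And>j. j < m \<Longrightarrow> finite (IntS nu j)" by (simp add: IntS_def)
  have "(\<Sum>lam\<in>boxL (M - 1) (IntS nu). D N (M - 1) lam) =
      (\<Sum>lam\<in>boxL m (IntS nu). det (mat m m (\<lambda>(j, i). F j (lam ! j) i)))"
  proof -
    have Mm: "M - 1 = m" using M by simp
    show ?thesis unfolding D_def Amat_def lv_def F_def Mm by simp
  qed
  also have "\<dots> = det (mat m m (\<lambda>(j, i). \<Sum>x\<in>IntS nu j. F j x i))"
    by (rule det_sum_rows[OF fin, symmetric])
  also have "mat m m (\<lambda>(j, i). \<Sum>x\<in>IntS nu j. F j x i) =
      mat m m (\<lambda>(j, i). ?C $$ (j, ins 1 i) - ?C $$ (Suc j, ins 1 i))"
  proof (rule eq_matI)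
    fix j i assume j: "j < dim_row (mat m m (\<lambda>(j, i). ?C $$ (j, ins 1 i) - ?C $$ (Suc j, ins 1 i)))"
      and i: "i < dim_col (mat m m (\<lambda>(j, i). ?C $$ (j, ins 1 i) - ?C $$ (Suc j, ins 1 i)))"
    have jm: "j < m" and im: "i < m" using i j by auto
    have ab: "nu ! (j + 1) \<le> nu ! j + 1" using sig_mono[OF nu, of j] jm M by simp
    have lvS: "lv nu (Suc j) = nu ! (j + 1) - 1 - int j - 1" by (simp add: lv_def)
    have lv0: "lv nu j = nu ! j - int j - 1" by (simp add: lv_def)
    show "mat m m (\<lambda>(j, i). \<Sum>x\<in>IntS nu j. F j x i) $$ (j, i) =
      mat m m (\<lambda>(j, i). ?C $$ (j, ins 1 i) - ?C $$ (Suc j, ins 1 i)) $$ (j, i)"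
    proof (cases "i = 0")
      case True
      have NM: "N - m = Suc (N - M)" using MN M by simp
      have "(\<Sum>x\<in>IntS nu j. F j x i) = (\<Sum>x\<in>{nu ! (j + 1)..nu ! j}. hh (N - m) (x - int j - 1))"
        by (simp add: F_def IntS_def True)
      also have "\<dots> = hh (N - M) (nu ! j - int j - 1) - hh (N - M) (nu ! (j + 1) - 1 - int j - 1)"
      proof (rule tele[OF _ ab])
        fix y
        have "hh (N - M) (y - int j - 1) - hh (N - M) (y - int j - 1 - 1) = hh (N - m) (y - int j - 1)"
          unfolding NM by (rule hh_diff)
        moreover have "y - 1 - int j - 1 = y - int j - 1 - 1" by simp
        ultimately show "hh (N - M) (y - int j - 1) - hh (N - M) (y - 1 - int j - 1) = hh (N - m) (y - int j - 1)"
          by simp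
      qed
      also have "\<dots> = ?C $$ (j, ins 1 i) - ?C $$ (Suc j, ins 1 i)"
        using jm M True by (simp add: Amat_def ins_def lv_def)
      finally show ?thesis using jm im by simp
    next
      case False
      then obtain i' where i': "i = Suc i'" by (cases i) auto
      have "(\<Sum>x\<in>IntS nu j. F j x i) = (\<Sum>x\<in>{nu ! (j + 1)..nu ! j}. pp i' (x - int j - 1))"
        by (simp add: F_def IntS_def i')
      also have "\<dots> = pp (Suc i') (nu ! j - int j - 1) - pp (Suc i') (nu ! (j + 1) - 1 - int j - 1)"
      proof (rule tele[OF _ ab])
        fix y
        have "pp (Suc i') (y - int j - 1) - pp (Suc i') (y - int j - 1 - 1) = pp i' (y - int j - 1)"
          by (rule pp_diff)
        moreover have "y - 1 - int j - 1 = y - int j - 1 - 1" by simp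
        ultimately show "pp (Suc i') (y - int j - 1) - pp (Suc i') (y - 1 - int j - 1) = pp i' (y - int j - 1)"
          by simp
      qed
      also have "\<dots> = ?C $$ (j, ins 1 i) - ?C $$ (Suc j, ins 1 i)"
        using jm im M i' by (simp add: Amat_def ins_def lv_def)
      finally show ?thesis using jm im by simp
    qed
  qed auto
  also have "det (mat m m (\<lambda>(j, i). ?C $$ (j, ins 1 i) - ?C $$ (Suc j, ins 1 i))) = (-1) ^ M * D N M nu"
  proof -
    have ones: "\<And>j. j < Suc m \<Longrightarrow> ?C $$ (j, 1) = 1" using m1 by (simp add: Amat_def M)
    have "D N M nu = (-1) ^ (m + 1) * det (mat m m (\<lambda>(j, i). ?C $$ (j, ins 1 i) - ?C $$ (Suc j, ins 1 i)))"
      unfolding D_def by (rule det_ones_col[OF C _ ones]) (use m1 in simp)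
    then have "(-1) ^ M * D N M nu = ((-1) ^ M * (-1) ^ M) * det (mat m m (\<lambda>(j, i). ?C $$ (j, ins 1 i) - ?C $$ (Suc j, ins 1 i)))"
      by (simp add: M mult.assoc)
    also have "(-1 :: K) ^ M * (-1) ^ M = 1" by (simp flip: power_add)
    finally show ?thesis by simp
  qed
  finally show ?thesis .
qed

definition sg :: "nat \<Rightarrow> K" where "sg M = (\<Prod>m\<in>{2..M}. (-1) ^ m)"

lemma main_ind:
  assumes "1 \<le> M" "M \<le> N" "nu \<in> sig M" "a \<le> nu ! (M - 1)" "nu ! 0 \<le> b"
  shows "(\<Sum>k\<in>{a..b}. of_nat (DimKN 1 M [k] nu) * hh (N - 1) (k - 1)) = sg M * D N M nu"
  using assms
proof (induction M arbitrary: nu rule: nat_induct_at_least)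
  case base
  then obtain c where nu: "nu = [c]" by (cases nu) (auto simp: sig_def)
  have cab: "c \<in> {a..b}" using base nu by simp
  have "(\<Sum>k\<in>{a..b}. of_nat (DimKN 1 1 [k] nu) * hh (N - 1) (k - 1)) =
      (\<Sum>k\<in>{a..b}. if k = c then hh (N - 1) (k - 1) else 0)"
    by (intro sum.cong refl) (auto simp: nu DimKN_1[simplified])
  also have "\<dots> = hh (N - 1) (c - 1)" using cab by (simp add: sum.delta')
  also have "\<dots> = sg 1 * D N 1 nu"
  proof -
    have "D N 1 nu = hh (N - 1) (c - 1)"
      unfolding D_def by (subst det_single) (auto simp: Amat_def lv_def nu)
    moreover have "sg 1 = 1" by (simp add: sg_def)
    ultimately show ?thesis by simp
  qed
  finally show ?case .
next
  case (Suc n)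
  have box: "lam \<in> sig n \<and> a \<le> lam ! (n - 1) \<and> lam ! 0 \<le> b" if lam: "lam \<in> boxL n (IntS nu)" for lam
  proof -
    have "lam ! (n - 1) \<in> IntS nu (n - 1)" "lam ! 0 \<in> IntS nu 0" using lam Suc.hyps by (auto simp: boxL_def)
    then show ?thesis using boxL_sig[OF lam] Suc.prems Suc.hyps by (auto simp: IntS_def)
  qed
  have "(\<Sum>k\<in>{a..b}. of_nat (DimKN 1 (Suc n) [k] nu) * hh (N - 1) (k - 1)) =
      (\<Sum>k\<in>{a..b}. \<Sum>lam\<in>boxL n (IntS nu). of_nat (DimKN 1 n [k] lam) * hh (N - 1) (k - 1))"
    using DimKN_step[of "Suc n" nu] Suc.prems Suc.hyps by (simp add: sum_distrib_right)
  also have "\<dots> = (\<Sum>lam\<in>boxL n (IntS nu). \<Sum>k\<in>{a..b}. of_nat (DimKN 1 n [k] lam) * hh (N - 1) (k - 1))"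
    by (rule sum.swap)
  also have "\<dots> = (\<Sum>lam\<in>boxL n (IntS nu). sg n * D N n lam)"
    by (intro sum.cong refl Suc.IH) (use box Suc.prems in auto)
  also have "\<dots> = sg n * (-1) ^ Suc n * D N (Suc n) nu"
    using D_branch[of "Suc n" N nu] Suc.prems Suc.hyps by (simp flip: sum_distrib_left)
  also have "sg n * (-1) ^ Suc n = sg (Suc n)"
  proof -
    have "{2..Suc n} = insert (Suc n) {2..n}" using Suc.hyps by auto
    then show ?thesis by (simp add: sg_def mult.commute)
  qed
  finally show ?case .
qed



lemma prod_1N: "(\<Prod>j\<in>{1..N}. f j) = (\<Prod>j<N. f (Suc j))"
  by (induction N) (simp_all add: prod.cl_ivl_Suc)

lemma to_fract_prod: "to_fract (prod f A) = (\<Prod>x\<in>A. to_fract (f x))"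
  by (induction A rule: infinite_finite_induct) simp_all

lemma sig_mono_gen: "nu \<in> sig N \<Longrightarrow> i \<le> j \<Longrightarrow> j < N \<Longrightarrow> nu ! j \<le> nu ! i"
proof (induction j)
  case 0 then show ?case by simp
next
  case (Suc j)
  show ?case
  proof (cases "i = Suc j")
    case True then show ?thesis by simp
  next
    case False
    then have "nu ! j \<le> nu ! i" using Suc by simp
    moreover have "nu ! (j + 1) \<le> nu ! j" using sig_mono[OF Suc.prems(1)] Suc.prems by simp
    ultimately show ?thesis by simp
  qed
qed

lemma pairs_Sigma: "{(i, j). i < j \<and> j < (N::nat)} = Sigma {..<N} (\<lambda>i. {i<..<N})"
  by (auto intro: less_trans)

lemma DimW_nested: "DimW N nu = (\<Prod>i<N. \<Prod>j\<in>{i<..<N}.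
    of_int (nu ! i - nu ! j - int i + int j) / of_int (int j - int i))"
  unfolding DimW_def pairs_Sigma by (subst prod.Sigma) auto

lemma DimW_pos: assumes "nu \<in> sig N" shows "DimW N nu > 0"
  unfolding DimW_nested
proof (intro prod_pos ballI)
  fix i j assume i: "i \<in> {..<N}" and j: "j \<in> {i<..<N}"
  have "nu ! j \<le> nu ! i" using sig_mono_gen[OF assms, of i j] i j by simp
  then show "0 < (of_int (nu ! i - nu ! j - int i + int j) / of_int (int j - int i) :: rat)"
    using j by simp
qed

definition WW :: "nat \<Rightarrow> K" where "WW N = (\<Prod>i<N. \<Prod>j\<in>{i<..<N}. of_int (int j - int i))"
definition cN :: "nat \<Rightarrow> K" where "cN N = (\<Prod>i<N. \<Prod>j\<in>{i<..<N}. (-1 :: K))"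
definition Pp :: "nat \<Rightarrow> K poly" where
  "Pp i = Polynomial.smult (inverse (of_nat (fact i))) (\<Prod>a<i. [:of_nat (Suc a), 1:])"
definition Qp :: "nat \<Rightarrow> K poly" where
  "Qp i = (if i = 0 then 1 else [:tt, -1:] * Pp (i - 1))"
definition cQ :: "nat \<Rightarrow> K" where "cQ N = (\<Prod>i<N. coeff (Qp i) i)"

lemma WW_nz: "WW N \<noteq> 0"
proof -
  have "(of_int (int j - int i) :: K) \<noteq> 0" if "i < j" for i j :: nat
  proof -
    have "int j - int i \<noteq> 0" using that by simp
    then show ?thesis by (metis of_int_K emb_eq_0_iff of_int_eq_0_iff)
  qed
  then show ?thesis unfolding WW_def by (simp add: prod_zero_iff)
qed

lemma poly_Pp: "poly (Pp i) (of_int x) = pp i x"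
  by (simp add: Pp_def pp_def poly_prod divide_inverse mult.commute add.commute)

lemma degree_Pp: "degree (Pp i) \<le> i"
proof -
  have "degree (\<Prod>a<i. [:(of_nat (Suc a) :: K), 1:]) \<le> (\<Sum>a<i. degree [:(of_nat (Suc a) :: K), 1:])"
    using degree_prod_sum_le[of "{..<i}" "\<lambda>a. [:(of_nat (Suc a) :: K), 1:]"] by (simp add: o_def)
  also have "\<dots> = i" by simp
  finally show ?thesis unfolding Pp_def using degree_smult_le order.trans by blast
qed

lemma degree_Qp: "degree (Qp i) \<le> i"
proof (cases i)
  case 0 then show ?thesis by (simp add: Qp_def)
next
  case (Suc i')
  have "degree ([:tt, -1:] * Pp i') \<le> degree [:tt, -1:] + degree (Pp i')" by (rule degree_mult_le)
  also have "\<dots> \<le> 1 + i'" using degree_Pp[of i'] by simp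
  finally show ?thesis using Suc by (simp add: Qp_def)
qed

lemma D_top:
  assumes N: "N \<ge> 1"
  shows "D N N nu * (\<Prod>j<N. (tt - of_int (lv nu j))) =
    cQ N * cN N * (\<Prod>i<N. \<Prod>j\<in>{i<..<N}. of_int (lv nu i - lv nu j))"
proof -
  define dd where "dd j = tt - of_int (lv nu j)" for j
  have ddnz: "dd j \<noteq> 0" for j unfolding dd_def using tt_int_nz[of "lv nu j" 0] by simp
  have hh0: "hh 0 x = 1 / (tt - of_int x)" for x by (simp add: hh_def)
  have "D N N nu = det (mat N N (\<lambda>(j, i). (1 / dd j) * (if i = 0 then 1 else dd j * pp (i - 1) (lv nu j))))"
    unfolding D_def Amat_def
    by (rule arg_cong[of _ _ det], rule eq_matI) (auto simp: hh0 dd_def[symmetric] ddnz)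
  also have "\<dots> = (\<Prod>j<N. 1 / dd j) * det (mat N N (\<lambda>(j, i). (if i = 0 then 1 else dd j * pp (i - 1) (lv nu j))))"
    by (rule det_scale_rows)
  also have "mat N N (\<lambda>(j, i). (if i = 0 then 1 else dd j * pp (i - 1) (lv nu j))) =
      mat N N (\<lambda>(j, i). poly (Qp i) (of_int (lv nu j)))"
    by (rule eq_matI) (auto simp: Qp_def poly_Pp dd_def left_diff_distrib)
  also have "det \<dots> = cQ N * det (mat N N (\<lambda>(j, i). (of_int (lv nu j) :: K) ^ i))"
    unfolding cQ_def by (rule det_poly_rows) (rule degree_Qp)
  also have "det (mat N N (\<lambda>(j, i). (of_int (lv nu j) :: K) ^ i)) =
      (\<Prod>i<N. \<Prod>j\<in>{i<..<N}. ((of_int (lv nu j) :: K) - of_int (lv nu i)))"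
    by (rule vandermonde)
  also have "\<dots> = cN N * (\<Prod>i<N. \<Prod>j\<in>{i<..<N}. of_int (lv nu i - lv nu j))"
    unfolding cN_def prod.distrib[symmetric] by (intro prod.cong refl) simp
  finally have "D N N nu = (\<Prod>j<N. 1 / dd j) * (cQ N * (cN N * (\<Prod>i<N. \<Prod>j\<in>{i<..<N}. of_int (lv nu i - lv nu j))))" .
  moreover have "(\<Prod>j<N. 1 / dd j) * (\<Prod>j<N. dd j) = 1"
    by (simp add: prod.distrib[symmetric] ddnz)
  ultimately show ?thesis unfolding dd_def[symmetric]
    by (metis (no_types, lifting) mult.assoc mult.commute mult.left_neutral)
qed



definition PP :: "nat \<Rightarrow> K" where "PP N = (\<Prod>j\<in>{1..N}. (tt + of_nat j))"

lemma PP_nz: "PP N \<noteq> 0"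
proof -
  have "tt + of_nat j \<noteq> 0" for j :: nat using tt_int_nz'[of "int j"] by simp
  then show ?thesis unfolding PP_def by (simp add: prod_zero_iff)
qed

lemma to_fract_lin_prod:
  "to_fract (\<Prod>j\<in>A. [:f j, 1:]) = (\<Prod>j\<in>A. (tt + emb (f j)))"
  by (simp add: to_fract_prod to_fract_lin)

lemma shift_ratio_eq:
  "shift_ratio N k = PP N / (\<Prod>j<N. (tt + of_nat (Suc j) - of_int k))"
proof -
  have "shift_ratio N k = to_fract (\<Prod>j\<in>{1..N}. [:of_nat j, 1:]) / to_fract (\<Prod>j\<in>{1..N}. [:of_nat j - of_int k, 1:])"
    by (simp add: shift_ratio_def Fract_conv_to_fract)
  also have "to_fract (\<Prod>j\<in>{1..N}. [:of_nat j, 1:]) = PP N"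
    unfolding to_fract_lin_prod PP_def by simp
  also have "to_fract (\<Prod>j\<in>{1..N}. [:of_nat j - of_int k, 1:]) = (\<Prod>j<N. (tt + of_nat (Suc j) - of_int k))"
    unfolding to_fract_lin_prod prod_1N by (intro prod.cong refl) (simp add: algebra_simps)
  finally show ?thesis .
qed

lemma hh_shift:
  assumes N: "N \<ge> 1"
  shows "hh (N - 1) (k - 1) = of_nat (fact (N - 1)) * shift_ratio N k / PP N"
proof -
  have "(\<Prod>i<Suc (N - 1). (tt - of_int (k - 1) + of_nat i)) = (\<Prod>j<N. (tt + of_nat (Suc j) - of_int k))"
    using N by (intro prod.cong) (auto simp: algebra_simps)
  then have "hh (N - 1) (k - 1) = of_nat (fact (N - 1)) / (\<Prod>j<N. (tt + of_nat (Suc j) - of_int k))"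
    by (simp add: hh_def)
  then show ?thesis using PP_nz by (simp add: shift_ratio_eq)
qed

lemma Hstar_eq: "Hstar N nu = PP N / (\<Prod>j<N. (tt - of_int (lv nu j)))"
proof -
  have "Hstar N nu = (\<Prod>j\<in>{1..N}. (tt + of_nat j) / (tt + (of_nat j - of_int (nu ! (j - 1)))))"
    unfolding Hstar_def
    by (intro prod.cong refl) (simp add: Fract_conv_to_fract to_fract_lin)
  also have "\<dots> = PP N / (\<Prod>j\<in>{1..N}. (tt + (of_nat j - of_int (nu ! (j - 1)))))"
    unfolding PP_def by (rule prod_dividef)
  also have "(\<Prod>j\<in>{1..N}. (tt + (of_nat j - of_int (nu ! (j - 1))))) = (\<Prod>j<N. (tt - of_int (lv nu j)))"
    unfolding prod_1N by (intro prod.cong refl) (simp add: lv_def algebra_simps)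
  finally show ?thesis .
qed

lemma DimW_emb: "emb (DimW N nu) * WW N = (\<Prod>i<N. \<Prod>j\<in>{i<..<N}. of_int (lv nu i - lv nu j))"
proof -
  have "emb (DimW N nu) = (\<Prod>i<N. \<Prod>j\<in>{i<..<N}. of_int (lv nu i - lv nu j) / of_int (int j - int i))"
    unfolding DimW_nested by (simp add: lv_def algebra_simps)
  also have "\<dots> = (\<Prod>i<N. \<Prod>j\<in>{i<..<N}. of_int (lv nu i - lv nu j)) / WW N"
    unfolding WW_def prod_dividef ..
  finally show ?thesis using WW_nz by simp
qed

definition kap :: "nat \<Rightarrow> K" where
  "kap N = sg N * cQ N * cN N * WW N / of_nat (fact (N - 1))"

lemma S_formula:
  assumes N: "N \<ge> 1" and nu: "nu \<in> sig N"
  shows "(\<Sum>k\<in>{nu ! (N - 1)..nu ! 0}. of_nat (DimKN 1 N [k] nu) * shift_ratio N k) =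
    kap N * emb (DimW N nu) * Hstar N nu"
proof -
  define S where "S = (\<Sum>k\<in>{nu ! (N - 1)..nu ! 0}. of_nat (DimKN 1 N [k] nu) * shift_ratio N k)"
  define Pd where "Pd = (\<Prod>j<N. (tt - of_int (lv nu j)))"
  define f where "f = (of_nat (fact (N - 1)) :: K)"
  have fnz: "f \<noteq> 0" unfolding f_def by (rule fact_K_nz)
  have "tt - of_int (lv nu j) \<noteq> 0" for j using tt_int_nz[of "lv nu j" 0] by simp
  then have Pdnz: "Pd \<noteq> 0" unfolding Pd_def by (simp add: prod_zero_iff)
  have e1: "(\<Sum>k\<in>{nu ! (N - 1)..nu ! 0}. of_nat (DimKN 1 N [k] nu) * hh (N - 1) (k - 1)) = sg N * D N N nu"
    by (rule main_ind) (use N nu in auto)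
  have "(\<Sum>k\<in>{nu ! (N - 1)..nu ! 0}. of_nat (DimKN 1 N [k] nu) * hh (N - 1) (k - 1)) = f / PP N * S"
    unfolding S_def f_def hh_shift[OF N] sum_distrib_left by (intro sum.cong refl) (simp add: algebra_simps)
  with e1 have e1': "S * f = sg N * D N N nu * PP N" using PP_nz by (simp add: field_simps)
  have e2: "D N N nu * Pd = cQ N * cN N * (emb (DimW N nu) * WW N)"
    unfolding Pd_def DimW_emb by (rule D_top[OF N])
  have e3: "Hstar N nu = PP N / Pd" unfolding Pd_def by (rule Hstar_eq)
  have "S * f * Pd = sg N * PP N * (D N N nu * Pd)" using e1' by (simp add: algebra_simps)
  also have "\<dots> = sg N * PP N * (cQ N * cN N * (emb (DimW N nu) * WW N))" by (simp only: e2)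
  finally have "S * f * Pd = sg N * PP N * (cQ N * cN N * (emb (DimW N nu) * WW N))" .
  then have "S = sg N * PP N * (cQ N * cN N * (emb (DimW N nu) * WW N)) / (f * Pd)"
    using fnz Pdnz by (simp add: field_simps)
  also have "\<dots> = kap N * emb (DimW N nu) * Hstar N nu"
    unfolding kap_def e3 f_def[symmetric] using fnz Pdnz by (simp add: field_simps)
  finally show ?thesis unfolding S_def .
qed

lemma kap_1:
  assumes N: "N \<ge> 1"
  shows "kap N = 1"
proof -
  let ?z = "replicate N (0::int)"
  have z: "?z \<in> sig N" by (rule rep_sig)
  have z0: "?z ! 0 = 0" "?z ! (N - 1) = 0" using N by auto
  have "(\<Sum>k\<in>{?z ! (N - 1)..?z ! 0}. of_nat (DimKN 1 N [k] ?z) * shift_ratio N k) = shift_ratio N 0"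
    unfolding z0 using DimKN_zero[OF N] by simp
  also have "shift_ratio N 0 = 1"
  proof -
    have "(\<Prod>j<N. (tt + of_nat (Suc j) - of_int 0)) = PP N" unfolding PP_def prod_1N by simp
    then show ?thesis using PP_nz by (simp add: shift_ratio_eq)
  qed
  finally have l: "(\<Sum>k\<in>{?z ! (N - 1)..?z ! 0}. of_nat (DimKN 1 N [k] ?z) * shift_ratio N k) = 1" .
  have d: "DimW N ?z = 1"
    unfolding DimW_nested by (intro prod.neutral ballI) (auto simp: nth_replicate)
  have h: "Hstar N ?z = 1"
  proof -
    have "(\<Prod>j<N. (tt - of_int (lv ?z j))) = PP N"
      unfolding PP_def prod_1N by (intro prod.cong refl) (simp add: lv_def algebra_simps)
    then show ?thesis using PP_nz by (simp add: Hstar_eq)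
  qed
  show ?thesis using S_formula[OF N z] l d h by simp
qed

theorem theorem3:
  fixes N :: nat and nu :: "int list"
  assumes "N \<ge> 1" and "nu \<in> sig N"
  shows "(\<forall>k. \<not> (nu ! (N - 1) \<le> k \<and> k \<le> nu ! 0) \<longrightarrow> Fk N nu k = 0) \<and>
         Hstar N nu = (\<Sum>k\<in>{nu ! (N - 1)..nu ! 0}. Fract [:Fk N nu k:] 1 * shift_ratio N k)"
proof
  show "\<forall>k. \<not> (nu ! (N - 1) \<le> k \<and> k \<le> nu ! 0) \<longrightarrow> Fk N nu k = 0"
    using DimKN_support[OF assms] by (auto simp: Fk_def)
next
  have Wnz: "DimW N nu \<noteq> 0" using DimW_pos[OF assms(2)] by simp
  have "(\<Sum>k\<in>{nu ! (N - 1)..nu ! 0}. Fract [:Fk N nu k:] 1 * shift_ratio N k) =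
      (\<Sum>k\<in>{nu ! (N - 1)..nu ! 0}. of_nat (DimKN 1 N [k] nu) * shift_ratio N k) / emb (DimW N nu)"
    unfolding sum_divide_distrib
    by (intro sum.cong refl) (simp add: Fk_def emb_def[symmetric] to_fract_def[symmetric])
  also have "\<dots> = Hstar N nu"
    using S_formula[OF assms] kap_1[OF assms(1)] Wnz by simp
  finally show "Hstar N nu = (\<Sum>k\<in>{nu ! (N - 1)..nu ! 0}. Fract [:Fk N nu k:] 1 * shift_ratio N k)" by simp
qed


end
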